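(* Let $H$ be a quasi-bialgebra, $\mathcal{A}$ an $H$-bimodule algebra, $\mathbb{A}$ an $H$-bicomodule algebra and $F\in H\otimes H$ a gauge transformation. Then the L-R-smash product $\mathcal{A}\natural\mathbb{A}$ (over $H$) and the L-R-smash product ${}_F\mathcal{A}_{F^{-1}}\natural{}^F\mathbb{A}^{F^{-1}}$ (over $H_F$) have the same multiplication on $\mathcal{A}\otimes\mathbb{A}$; i.e. the identity map is an algebra isomorphism.
   Context: Work over a field $k$. $H$ is a quasi-bialgebra $(H,\Delta,\varepsilon,\Phi)$ (unital algebra, algebra maps $\Delta(h)=h_1\otimes h_2$, $\varepsilon$, invertible $\Phi$ with $(id\otimes\Delta)\Delta(h)=\Phi(\Delta\otimes id)\Delta(h)\Phi^{-1}$, counit axioms, pentagon 3-cocycle condition, $(id\otimes\varepsilon\otimes id)\Phi=1\otimes1\otimes1$). $H$-bimodule algebras and $H$-bicomodule algebras $(\mathbb{A},\lambda,\rho,\Phi_\lambda,\Phi_\rho,\Phi_{\lambda,\rho})$ are defined in the sense of Hausser–Nill (algebras in the monoidal category of $H$-bimodules with associator $\Phi\cdot(-)\cdot\Phi^{-1}$; resp. compatible left and right quasi-coactions $\lambda(u)=u_{[-1]}\otimes u_{[0]}$, $\rho(u)=u_{<0>}\otimes u_{<1>}$ with reassociators $\Phi_\lambda\in H\otimes H\otimes\mathbb{A}$, $\Phi_\rho\in\mathbb{A}\otimes H\otimes H$, $\Phi_{\lambda,\rho}\in H\otimes\mathbb{A}\otimes H$). A gauge transformation is an invertible $F=F^1\otimes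 F^2\in H\otimes H$ with $(\varepsilon\otimes id)F=(id\otimes\varepsilon)F=1$; write $F^{-1}=G^1\otimes G^2$. $H_F$ is the quasi-bialgebra with the same algebra and counit, $\Delta_F(h)=F\Delta(h)F^{-1}$, $\Phi_F=(1\otimes F)(id\otimes\Delta)(F)\Phi(\Delta\otimes id)(F^{-1})(F^{-1}\otimes1)$. ${}_F\mathcal{A}_{F^{-1}}$ is $\mathcal{A}$ with the same unit and actions and new product $\varphi\circ\varphi'=(G^1\cdot\varphi\cdot F^1)(G^2\cdot\varphi'\cdot F^2)$; it is an $H_F$-bimodule algebra. ${}^F\mathbb{A}^{F^{-1}}$ is the $H_F$-bicomodule algebra with the same algebra, $\lambda$, $\rho$ and $\Phi_{\lambda,\rho}$, and with reassociators $\Phi_\lambda(F^{-1}\otimes1_{\mathbb{A}})$ and $(1_{\mathbb{A}}\otimes F)\Phi_\rho$. The L-R-smash product over a quasi-bialgebra $H$: $\mathcal{A}\otimes\mathbb{A}$ with product $(\varphi\natural u)(\psi\natural u')=(\tilde{x}^1_{\lambda}\cdot\varphi\cdot\theta^3u'_{<1>}\tilde{x}^2_{\rho})(\tilde{x}^2_{\lambda}u_{[-1]}\theta^1\cdot\psi\cdot\tilde{x}^3_{\rho})\natural\tilde{x}^3_{\lambda}u_{[0]}\theta^2u'_{<0>}\tilde{x}^1_{\rho}$, where $\Phi_\rho^{-1}=\tilde{x}^1_\rho\otimes\tilde{x}^2_\rho\otimes\tilde{x}^3_\rho$, $\Phi_\lambda^{-1}=\tilde{x}^1_\lambda\otimes\tilde{x}^2_\lambda\otimes\tilde{x}^3_\lambda$,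 $\Phi_{\lambda,\rho}^{-1}=\theta^1\otimes\theta^2\otimes\theta^3$. *)

theory Defs
  imports Main "HOL.Vector_Spaces"
begin

text \<open>An element of V1 (x) ... (x) Vn is represented by a formal sum of pure tensors,
i.e. a list of n-tuples; the list [(a1,b1),...,(am,bm)] stands for a1(x)b1 + ... + am(x)bm.
Equality in the tensor product is the congruence generated by commutativity of the
formal sum, additivity in each slot, zero, and moving scalars between slots.  The vector space structures are
given by the additive group structure of the types and explicit scalar multiplications.\<close>

inductive teq2 :: "('k::field \<Rightarrow> 'a::ab_group_add \<Rightarrow> 'a) \<Rightarrow> ('k \<Rightarrow> 'b::ab_group_add \<Rightarrow> 'b)
    \<Rightarrow> ('a \<times> 'b) list \<Rightarrow> ('a \<times> 'b) list \<Rightarrow> bool"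
  for s1 s2 where
  t2_refl: "teq2 s1 s2 xs xs"
| t2_sym: "teq2 s1 s2 xs ys \<Longrightarrow> teq2 s1 s2 ys xs"
| t2_trans: "teq2 s1 s2 xs ys \<Longrightarrow> teq2 s1 s2 ys zs \<Longrightarrow> teq2 s1 s2 xs zs"
| t2_app: "teq2 s1 s2 xs xs' \<Longrightarrow> teq2 s1 s2 ys ys' \<Longrightarrow> teq2 s1 s2 (xs @ ys) (xs' @ ys')"
| t2_swap: "teq2 s1 s2 (xs @ ys) (ys @ xs)"
| t2_zero: "teq2 s1 s2 [(0, b)] []"
| t2_add1: "teq2 s1 s2 [(a + a', b)] [(a, b), (a', b)]"
| t2_add2: "teq2 s1 s2 [(a, b + b')] [(a, b), (a, b')]"
| t2_sc: "teq2 s1 s2 [(s1 c a, b)] [(a, s2 c b)]"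

inductive teq3 :: "('k::field \<Rightarrow> 'a::ab_group_add \<Rightarrow> 'a) \<Rightarrow> ('k \<Rightarrow> 'b::ab_group_add \<Rightarrow> 'b)
    \<Rightarrow> ('k \<Rightarrow> 'c::ab_group_add \<Rightarrow> 'c)
    \<Rightarrow> ('a \<times> 'b \<times> 'c) list \<Rightarrow> ('a \<times> 'b \<times> 'c) list \<Rightarrow> bool"
  for s1 s2 s3 where
  t3_refl: "teq3 s1 s2 s3 xs xs"
| t3_sym: "teq3 s1 s2 s3 xs ys \<Longrightarrow> teq3 s1 s2 s3 ys xs"
| t3_trans: "teq3 s1 s2 s3 xs ys \<Longrightarrow> teq3 s1 s2 s3 ys zs \<Longrightarrow> teq3 s1 s2 s3 xs zs"
| t3_app: "teq3 s1 s2 s3 xs xs' \<Longrightarrow> teq3 s1 s2 s3 ys ys' \<Longrightarrow> teq3 s1 s2 s3 (xs @ ys) (xs' @ ys')"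
| t3_swap: "teq3 s1 s2 s3 (xs @ ys) (ys @ xs)"
| t3_zero: "teq3 s1 s2 s3 [(0, b, c)] []"
| t3_add1: "teq3 s1 s2 s3 [(a + a', b, c)] [(a, b, c), (a', b, c)]"
| t3_add2: "teq3 s1 s2 s3 [(a, b + b', c)] [(a, b, c), (a, b', c)]"
| t3_add3: "teq3 s1 s2 s3 [(a, b, c + c')] [(a, b, c), (a, b, c')]"
| t3_sc2: "teq3 s1 s2 s3 [(s1 r a, b, c)] [(a, s2 r b, c)]"
| t3_sc3: "teq3 s1 s2 s3 [(s1 r a, b, c)] [(a, b, s3 r c)]"

inductive teq4 :: "('k::field \<Rightarrow> 'a::ab_group_add \<Rightarrow> 'a) \<Rightarrow> ('k \<Rightarrow> 'b::ab_group_add \<Rightarrow> 'b)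
    \<Rightarrow> ('k \<Rightarrow> 'c::ab_group_add \<Rightarrow> 'c) \<Rightarrow> ('k \<Rightarrow> 'd::ab_group_add \<Rightarrow> 'd)
    \<Rightarrow> ('a \<times> 'b \<times> 'c \<times> 'd) list \<Rightarrow> ('a \<times> 'b \<times> 'c \<times> 'd) list \<Rightarrow> bool"
  for s1 s2 s3 s4 where
  t4_refl: "teq4 s1 s2 s3 s4 xs xs"
| t4_sym: "teq4 s1 s2 s3 s4 xs ys \<Longrightarrow> teq4 s1 s2 s3 s4 ys xs"
| t4_trans: "teq4 s1 s2 s3 s4 xs ys \<Longrightarrow> teq4 s1 s2 s3 s4 ys zs \<Longrightarrow> teq4 s1 s2 s3 s4 xs zs"
| t4_app: "teq4 s1 s2 s3 s4 xs xs' \<Longrightarrow> teq4 s1 s2 s3 s4 ys ys' \<Longrightarrow> teq4 s1 s2 s3 s4 (xs @ ys) (xs' @ ys')"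
| t4_swap: "teq4 s1 s2 s3 s4 (xs @ ys) (ys @ xs)"
| t4_zero: "teq4 s1 s2 s3 s4 [(0, b, c, d)] []"
| t4_add1: "teq4 s1 s2 s3 s4 [(a + a', b, c, d)] [(a, b, c, d), (a', b, c, d)]"
| t4_add2: "teq4 s1 s2 s3 s4 [(a, b + b', c, d)] [(a, b, c, d), (a, b', c, d)]"
| t4_add3: "teq4 s1 s2 s3 s4 [(a, b, c + c', d)] [(a, b, c, d), (a, b, c', d)]"
| t4_add4: "teq4 s1 s2 s3 s4 [(a, b, c, d + d')] [(a, b, c, d), (a, b, c, d')]"
| t4_sc2: "teq4 s1 s2 s3 s4 [(s1 r a, b, c, d)] [(a, s2 r b, c, d)]"
| t4_sc3: "teq4 s1 s2 s3 s4 [(s1 r a, b, c, d)] [(a, b, s3 r c, d)]"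
| t4_sc4: "teq4 s1 s2 s3 s4 [(s1 r a, b, c, d)] [(a, b, c, s4 r d)]"

definition tm2 :: "('a \<Rightarrow> 'a \<Rightarrow> 'a) \<Rightarrow> ('b \<Rightarrow> 'b \<Rightarrow> 'b) \<Rightarrow> ('a \<times> 'b) list \<Rightarrow> ('a \<times> 'b) list \<Rightarrow> ('a \<times> 'b) list" where
  "tm2 m1 m2 xs ys = [(m1 a a', m2 b b'). (a, b) \<leftarrow> xs, (a', b') \<leftarrow> ys]"

definition tm3 :: "('a \<Rightarrow> 'a \<Rightarrow> 'a) \<Rightarrow> ('b \<Rightarrow> 'b \<Rightarrow> 'b) \<Rightarrow> ('c \<Rightarrow> 'c \<Rightarrow> 'c)
    \<Rightarrow> ('a \<times> 'b \<times> 'c) list \<Rightarrow> ('a \<times> 'b \<times> 'c) list \<Rightarrow> ('a \<times> 'b \<times> 'c) list" where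
  "tm3 m1 m2 m3 xs ys = [(m1 a a', m2 b b', m3 c c'). (a, b, c) \<leftarrow> xs, (a', b', c') \<leftarrow> ys]"

definition tm4 :: "('a \<Rightarrow> 'a \<Rightarrow> 'a) \<Rightarrow> ('b \<Rightarrow> 'b \<Rightarrow> 'b) \<Rightarrow> ('c \<Rightarrow> 'c \<Rightarrow> 'c) \<Rightarrow> ('d \<Rightarrow> 'd \<Rightarrow> 'd)
    \<Rightarrow> ('a \<times> 'b \<times> 'c \<times> 'd) list \<Rightarrow> ('a \<times> 'b \<times> 'c \<times> 'd) list \<Rightarrow> ('a \<times> 'b \<times> 'c \<times> 'd) list" where
  "tm4 m1 m2 m3 m4 xs ys = [(m1 a a', m2 b b', m3 c c', m4 d d'). (a, b, c, d) \<leftarrow> xs, (a', b', c', d') \<leftarrow> ys]"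

text \<open>Applying a map V \<rightarrow> X (x) Y to one tensor slot, e.g. (f (x) id) and (id (x) f).\<close>

definition app2_1 :: "('a \<Rightarrow> ('c \<times> 'd) list) \<Rightarrow> ('a \<times> 'b) list \<Rightarrow> ('c \<times> 'd \<times> 'b) list" where
  "app2_1 f xs = [(c, d, b). (a, b) \<leftarrow> xs, (c, d) \<leftarrow> f a]"

definition app2_2 :: "('b \<Rightarrow> ('c \<times> 'd) list) \<Rightarrow> ('a \<times> 'b) list \<Rightarrow> ('a \<times> 'c \<times> 'd) list" where
  "app2_2 f xs = [(a, c, d). (a, b) \<leftarrow> xs, (c, d) \<leftarrow> f b]"

definition app3_1 :: "('a \<Rightarrow> ('p \<times> 'q) list) \<Rightarrow> ('a \<times> 'b \<times> 'c) list \<Rightarrow> ('p \<times> 'q \<times> 'b \<times> 'c) list" where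
  "app3_1 f xs = [(p, q, b, c). (a, b, c) \<leftarrow> xs, (p, q) \<leftarrow> f a]"

definition app3_2 :: "('b \<Rightarrow> ('p \<times> 'q) list) \<Rightarrow> ('a \<times> 'b \<times> 'c) list \<Rightarrow> ('a \<times> 'p \<times> 'q \<times> 'c) list" where
  "app3_2 f xs = [(a, p, q, c). (a, b, c) \<leftarrow> xs, (p, q) \<leftarrow> f b]"

definition app3_3 :: "('c \<Rightarrow> ('p \<times> 'q) list) \<Rightarrow> ('a \<times> 'b \<times> 'c) list \<Rightarrow> ('a \<times> 'b \<times> 'p \<times> 'q) list" where
  "app3_3 f xs = [(a, b, p, q). (a, b, c) \<leftarrow> xs, (p, q) \<leftarrow> f c]"

definition tinv2 where
  "tinv2 s1 s2 m1 m2 o1 o2 X Y \<longleftrightarrow>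
     teq2 s1 s2 (tm2 m1 m2 X Y) [(o1, o2)] \<and> teq2 s1 s2 (tm2 m1 m2 Y X) [(o1, o2)]"

definition tinv3 where
  "tinv3 s1 s2 s3 m1 m2 m3 o1 o2 o3 X Y \<longleftrightarrow>
     teq3 s1 s2 s3 (tm3 m1 m2 m3 X Y) [(o1, o2, o3)] \<and> teq3 s1 s2 s3 (tm3 m1 m2 m3 Y X) [(o1, o2, o3)]"

definition bilinear_mult :: "('k::field \<Rightarrow> 'a::ab_group_add \<Rightarrow> 'a) \<Rightarrow> ('a \<Rightarrow> 'a \<Rightarrow> 'a) \<Rightarrow> bool" where
  "bilinear_mult s m \<longleftrightarrow>
     (\<forall>a b c. m (a + b) c = m a c + m b c) \<and> (\<forall>a b c. m a (b + c) = m a b + m a c) \<and>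
     (\<forall>r a b. m (s r a) b = s r (m a b) \<and> m a (s r b) = s r (m a b))"

text \<open>Unital (not necessarily associative) k-algebra.\<close>
definition unital_kalg :: "('k::field \<Rightarrow> 'a::ab_group_add \<Rightarrow> 'a) \<Rightarrow> ('a \<Rightarrow> 'a \<Rightarrow> 'a) \<Rightarrow> 'a \<Rightarrow> bool" where
  "unital_kalg s m e \<longleftrightarrow> vector_space s \<and> bilinear_mult s m \<and> (\<forall>a. m e a = a \<and> m a e = a)"

definition kalg :: "('k::field \<Rightarrow> 'a::ab_group_add \<Rightarrow> 'a) \<Rightarrow> ('a \<Rightarrow> 'a \<Rightarrow> 'a) \<Rightarrow> 'a \<Rightarrow> bool" where
  "kalg s m e \<longleftrightarrow> unital_kalg s m e \<and> (\<forall>a b c. m (m a b) c = m a (m b c))"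

text \<open>k-linear map V \<rightarrow> X (x) Y (given by representatives).\<close>
definition lin_to2 :: "('k::field \<Rightarrow> 'v::ab_group_add \<Rightarrow> 'v) \<Rightarrow> ('k \<Rightarrow> 'a::ab_group_add \<Rightarrow> 'a)
    \<Rightarrow> ('k \<Rightarrow> 'b::ab_group_add \<Rightarrow> 'b) \<Rightarrow> ('v \<Rightarrow> ('a \<times> 'b) list) \<Rightarrow> bool" where
  "lin_to2 s s1 s2 f \<longleftrightarrow>
     (\<forall>u v. teq2 s1 s2 (f (u + v)) (f u @ f v)) \<and>
     (\<forall>r v. teq2 s1 s2 (f (s r v)) (map (\<lambda>(a, b). (s1 r a, b)) (f v)))"

text \<open>H is the type 'h (a unital ring) with scalar multiplication sH; Delta(h) is given by a
representative in H (x) H, Phi and Phii are representatives of Phi and Phi^-1.\<close>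

definition quasi_bialgebra :: "('k::field \<Rightarrow> 'h::ring_1 \<Rightarrow> 'h) \<Rightarrow> ('h \<Rightarrow> ('h \<times> 'h) list) \<Rightarrow> ('h \<Rightarrow> 'k)
    \<Rightarrow> ('h \<times> 'h \<times> 'h) list \<Rightarrow> ('h \<times> 'h \<times> 'h) list \<Rightarrow> bool" where
  "quasi_bialgebra sH \<Delta> \<epsilon> \<Phi> \<Phi>i \<longleftrightarrow>
     kalg sH (*) 1 \<and>
     lin_to2 sH sH sH \<Delta> \<and>
     (\<forall>a b. teq2 sH sH (\<Delta> (a * b)) (tm2 (*) (*) (\<Delta> a) (\<Delta> b))) \<and>
     teq2 sH sH (\<Delta> 1) [(1, 1)] \<and>
     (\<forall>a b. \<epsilon> (a + b) = \<epsilon> a + \<epsilon> b) \<and> (\<forall>r a. \<epsilon> (sH r a) = r * \<epsilon> a) \<and>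
     (\<forall>a b. \<epsilon> (a * b) = \<epsilon> a * \<epsilon> b) \<and> \<epsilon> 1 = 1 \<and>
     tinv3 sH sH sH (*) (*) (*) 1 1 1 \<Phi> \<Phi>i \<and>
     (\<forall>h. teq3 sH sH sH (app2_2 \<Delta> (\<Delta> h))
            (tm3 (*) (*) (*) (tm3 (*) (*) (*) \<Phi> (app2_1 \<Delta> (\<Delta> h))) \<Phi>i)) \<and>
     (\<forall>h. sum_list (map (\<lambda>(a, b). sH (\<epsilon> a) b) (\<Delta> h)) = h) \<and>
     (\<forall>h. sum_list (map (\<lambda>(a, b). sH (\<epsilon> b) a) (\<Delta> h)) = h) \<and>
     teq4 sH sH sH sH
       (tm4 (*) (*) (*) (*)
          (tm4 (*) (*) (*) (*) (map (\<lambda>(a, b, c). (1, a, b, c)) \<Phi>) (app3_2 \<Delta> \<Phi>))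
          (map (\<lambda>(a, b, c). (a, b, c, 1)) \<Phi>))
       (tm4 (*) (*) (*) (*) (app3_3 \<Delta> \<Phi>) (app3_1 \<Delta> \<Phi>)) \<and>
     teq2 sH sH (map (\<lambda>(a, b, c). (sH (\<epsilon> b) a, c)) \<Phi>) [(1, 1)]"

definition gauge_transformation :: "('k::field \<Rightarrow> 'h::ring_1 \<Rightarrow> 'h) \<Rightarrow> ('h \<Rightarrow> 'k)
    \<Rightarrow> ('h \<times> 'h) list \<Rightarrow> ('h \<times> 'h) list \<Rightarrow> bool" where
  "gauge_transformation sH \<epsilon> F Fi \<longleftrightarrow>
     tinv2 sH sH (*) (*) 1 1 F Fi \<and>
     sum_list (map (\<lambda>(a, b). sH (\<epsilon> a) b) F) = 1 \<and>
     sum_list (map (\<lambda>(a, b). sH (\<epsilon> b) a) F) = 1"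

text \<open>la h x = h.x, ra x h = x.h, mA the multiplication, oA the unit.\<close>

definition bimodule_algebra :: "('k::field \<Rightarrow> 'h::ring_1 \<Rightarrow> 'h) \<Rightarrow> ('h \<Rightarrow> ('h \<times> 'h) list) \<Rightarrow> ('h \<Rightarrow> 'k)
    \<Rightarrow> ('h \<times> 'h \<times> 'h) list \<Rightarrow> ('h \<times> 'h \<times> 'h) list
    \<Rightarrow> ('k \<Rightarrow> 'a::ab_group_add \<Rightarrow> 'a) \<Rightarrow> ('h \<Rightarrow> 'a \<Rightarrow> 'a) \<Rightarrow> ('a \<Rightarrow> 'h \<Rightarrow> 'a)
    \<Rightarrow> ('a \<Rightarrow> 'a \<Rightarrow> 'a) \<Rightarrow> 'a \<Rightarrow> bool" where
  "bimodule_algebra sH \<Delta> \<epsilon> \<Phi> \<Phi>i sA la ra mA oA \<longleftrightarrow>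
     unital_kalg sA mA oA \<and>
     (\<forall>h h' x. la (h + h') x = la h x + la h' x) \<and> (\<forall>h x y. la h (x + y) = la h x + la h y) \<and>
     (\<forall>r h x. la (sH r h) x = sA r (la h x) \<and> la h (sA r x) = sA r (la h x)) \<and>
     (\<forall>h h' x. ra x (h + h') = ra x h + ra x h') \<and> (\<forall>h x y. ra (x + y) h = ra x h + ra y h) \<and>
     (\<forall>r h x. ra x (sH r h) = sA r (ra x h) \<and> ra (sA r x) h = sA r (ra x h)) \<and>
     (\<forall>h h' x. la (h * h') x = la h (la h' x)) \<and> (\<forall>x. la 1 x = x) \<and>
     (\<forall>h h' x. ra x (h * h') = ra (ra x h) h') \<and> (\<forall>x. ra x 1 = x) \<and>
     (\<forall>h h' x. la h (ra x h') = ra (la h x) h') \<and>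
     (\<forall>h h' x y. la h (ra (mA x y) h') =
        sum_list [mA (la h1 (ra x k1)) (la h2 (ra y k2)). (h1, h2) \<leftarrow> \<Delta> h, (k1, k2) \<leftarrow> \<Delta> h']) \<and>
     (\<forall>h h'. la h (ra oA h') = sA (\<epsilon> h * \<epsilon> h') oA) \<and>
     (\<forall>x y z. mA (mA x y) z =
        sum_list [mA (la X1 (ra x x1)) (mA (la X2 (ra y x2)) (la X3 (ra z x3))).
                    (X1, X2, X3) \<leftarrow> \<Phi>, (x1, x2, x3) \<leftarrow> \<Phi>i])"

section \<open>H-comodule algebras and H-bicomodule algebras (Hausser--Nill)\<close>

definition left_comodule_algebra :: "('k::field \<Rightarrow> 'h::ring_1 \<Rightarrow> 'h) \<Rightarrow> ('h \<Rightarrow> ('h \<times> 'h) list) \<Rightarrow> ('h \<Rightarrow> 'k)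
    \<Rightarrow> ('h \<times> 'h \<times> 'h) list
    \<Rightarrow> ('k \<Rightarrow> 'u::ab_group_add \<Rightarrow> 'u) \<Rightarrow> ('u \<Rightarrow> 'u \<Rightarrow> 'u) \<Rightarrow> 'u
    \<Rightarrow> ('u \<Rightarrow> ('h \<times> 'u) list) \<Rightarrow> ('h \<times> 'h \<times> 'u) list \<Rightarrow> ('h \<times> 'h \<times> 'u) list \<Rightarrow> bool" where
  "left_comodule_algebra sH \<Delta> \<epsilon> \<Phi> sU mU oU lam Pl Pli \<longleftrightarrow>
     kalg sU mU oU \<and>
     lin_to2 sU sH sU lam \<and>
     (\<forall>u v. teq2 sH sU (lam (mU u v)) (tm2 (*) mU (lam u) (lam v))) \<and>
     teq2 sH sU (lam oU) [(1, oU)] \<and>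
     tinv3 sH sH sU (*) (*) mU 1 1 oU Pl Pli \<and>
     (\<forall>u. teq3 sH sH sU (tm3 (*) (*) mU (app2_2 lam (lam u)) Pl)
                        (tm3 (*) (*) mU Pl (app2_1 \<Delta> (lam u)))) \<and>
     teq4 sH sH sH sU
       (tm4 (*) (*) (*) mU
          (tm4 (*) (*) (*) mU (map (\<lambda>(a, b, c). (1, a, b, c)) Pl) (app3_2 \<Delta> Pl))
          (map (\<lambda>(a, b, c). (a, b, c, oU)) \<Phi>))
       (tm4 (*) (*) (*) mU (app3_3 lam Pl) (app3_1 \<Delta> Pl)) \<and>
     (\<forall>u. sum_list (map (\<lambda>(h, v). sU (\<epsilon> h) v) (lam u)) = u) \<and>
     teq2 sH sU (map (\<lambda>(a, b, c). (sH (\<epsilon> b) a, c)) Pl) [(1, oU)]"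

definition right_comodule_algebra :: "('k::field \<Rightarrow> 'h::ring_1 \<Rightarrow> 'h) \<Rightarrow> ('h \<Rightarrow> ('h \<times> 'h) list) \<Rightarrow> ('h \<Rightarrow> 'k)
    \<Rightarrow> ('h \<times> 'h \<times> 'h) list
    \<Rightarrow> ('k \<Rightarrow> 'u::ab_group_add \<Rightarrow> 'u) \<Rightarrow> ('u \<Rightarrow> 'u \<Rightarrow> 'u) \<Rightarrow> 'u
    \<Rightarrow> ('u \<Rightarrow> ('u \<times> 'h) list) \<Rightarrow> ('u \<times> 'h \<times> 'h) list \<Rightarrow> ('u \<times> 'h \<times> 'h) list \<Rightarrow> bool" where
  "right_comodule_algebra sH \<Delta> \<epsilon> \<Phi> sU mU oU rho Pr Pri \<longleftrightarrow>
     kalg sU mU oU \<and>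
     lin_to2 sU sU sH rho \<and>
     (\<forall>u v. teq2 sU sH (rho (mU u v)) (tm2 mU (*) (rho u) (rho v))) \<and>
     teq2 sU sH (rho oU) [(oU, 1)] \<and>
     tinv3 sU sH sH mU (*) (*) oU 1 1 Pr Pri \<and>
     (\<forall>u. teq3 sU sH sH (tm3 mU (*) (*) Pr (app2_1 rho (rho u)))
                        (tm3 mU (*) (*) (app2_2 \<Delta> (rho u)) Pr)) \<and>
     teq4 sU sH sH sH
       (tm4 mU (*) (*) (*)
          (tm4 mU (*) (*) (*) (map (\<lambda>(a, b, c). (oU, a, b, c)) \<Phi>) (app3_2 \<Delta> Pr))
          (map (\<lambda>(a, b, c). (a, b, c, 1)) Pr))
       (tm4 mU (*) (*) (*) (app3_3 \<Delta> Pr) (app3_1 rho Pr)) \<and>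
     (\<forall>u. sum_list (map (\<lambda>(v, h). sU (\<epsilon> h) v) (rho u)) = u) \<and>
     teq2 sU sH (map (\<lambda>(a, b, c). (sU (\<epsilon> b) a, c)) Pr) [(oU, 1)]"

definition bicomodule_algebra :: "('k::field \<Rightarrow> 'h::ring_1 \<Rightarrow> 'h) \<Rightarrow> ('h \<Rightarrow> ('h \<times> 'h) list) \<Rightarrow> ('h \<Rightarrow> 'k)
    \<Rightarrow> ('h \<times> 'h \<times> 'h) list
    \<Rightarrow> ('k \<Rightarrow> 'u::ab_group_add \<Rightarrow> 'u) \<Rightarrow> ('u \<Rightarrow> 'u \<Rightarrow> 'u) \<Rightarrow> 'u
    \<Rightarrow> ('u \<Rightarrow> ('h \<times> 'u) list) \<Rightarrow> ('u \<Rightarrow> ('u \<times> 'h) list)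
    \<Rightarrow> ('h \<times> 'h \<times> 'u) list \<Rightarrow> ('h \<times> 'h \<times> 'u) list
    \<Rightarrow> ('u \<times> 'h \<times> 'h) list \<Rightarrow> ('u \<times> 'h \<times> 'h) list
    \<Rightarrow> ('h \<times> 'u \<times> 'h) list \<Rightarrow> ('h \<times> 'u \<times> 'h) list \<Rightarrow> bool" where
  "bicomodule_algebra sH \<Delta> \<epsilon> \<Phi> sU mU oU lam rho Pl Pli Pr Pri Plr Plri \<longleftrightarrow>
     left_comodule_algebra sH \<Delta> \<epsilon> \<Phi> sU mU oU lam Pl Pli \<and>
     right_comodule_algebra sH \<Delta> \<epsilon> \<Phi> sU mU oU rho Pr Pri \<and>
     tinv3 sH sU sH (*) mU (*) 1 oU 1 Plr Plri \<and>
     (\<forall>u. teq3 sH sU sH (tm3 (*) mU (*) (app2_2 rho (lam u)) Plr)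
                        (tm3 (*) mU (*) Plr (app2_1 lam (rho u)))) \<and>
     teq4 sH sH sU sH
       (tm4 (*) (*) mU (*)
          (tm4 (*) (*) mU (*) (map (\<lambda>(a, b, c). (1, a, b, c)) Plr) (app3_2 lam Plr))
          (map (\<lambda>(a, b, c). (a, b, c, 1)) Pl))
       (tm4 (*) (*) mU (*) (app3_3 rho Pl) (app3_1 \<Delta> Plr)) \<and>
     teq4 sH sU sH sH
       (tm4 (*) mU (*) (*)
          (tm4 (*) mU (*) (*) (map (\<lambda>(a, b, c). (1, a, b, c)) Pr) (app3_2 rho Plr))
          (map (\<lambda>(a, b, c). (a, b, c, 1)) Plr))
       (tm4 (*) mU (*) (*) (app3_3 \<Delta> Plr) (app3_1 lam Pr))"

text \<open>Multiplication of the twisted bimodule algebra  _F A_{F^-1}: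
  x o y = (G^1.x.F^1)(G^2.y.F^2), where Fi = G^1 (x) G^2 represents F^-1.\<close>
definition gauge_mult :: "('h \<Rightarrow> 'a \<Rightarrow> 'a) \<Rightarrow> ('a \<Rightarrow> 'h \<Rightarrow> 'a) \<Rightarrow> ('a \<Rightarrow> 'a \<Rightarrow> 'a::ab_group_add)
    \<Rightarrow> ('h \<times> 'h) list \<Rightarrow> ('h \<times> 'h) list \<Rightarrow> 'a \<Rightarrow> 'a \<Rightarrow> 'a" where
  "gauge_mult la ra mA F Fi x y =
     sum_list [mA (la g1 (ra x f1)) (la g2 (ra y f2)). (g1, g2) \<leftarrow> Fi, (f1, f2) \<leftarrow> F]"

text \<open>Reassociators of the twisted bicomodule algebra ^F A^{F^-1}:
  Phi_lambda (F^-1 (x) 1) and (1 (x) F) Phi_rho.\<close>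
definition gauge_Phi_lambda :: "('u \<Rightarrow> 'u \<Rightarrow> 'u) \<Rightarrow> 'u \<Rightarrow> ('h::ring_1 \<times> 'h \<times> 'u) list
    \<Rightarrow> ('h \<times> 'h) list \<Rightarrow> ('h \<times> 'h \<times> 'u) list" where
  "gauge_Phi_lambda mU oU Pl Fi = tm3 (*) (*) mU Pl (map (\<lambda>(a, b). (a, b, oU)) Fi)"

definition gauge_Phi_rho :: "('u \<Rightarrow> 'u \<Rightarrow> 'u) \<Rightarrow> 'u \<Rightarrow> ('u \<times> 'h::ring_1 \<times> 'h) list
    \<Rightarrow> ('h \<times> 'h) list \<Rightarrow> ('u \<times> 'h \<times> 'h) list" where
  "gauge_Phi_rho mU oU Pr F = tm3 mU (*) (*) (map (\<lambda>(a, b). (oU, a, b)) F) Pr"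

text \<open>L-R-smash product of pure tensors:
  (x # u)(y # v) = (xl1.x.t3 v<1> xr2)(xl2 u[-1] t1 . y . xr3) # xl3 u[0] t2 v<0> xr1,
  with Xl, Xr, Th representatives of Phi_lambda^-1, Phi_rho^-1, Phi_{lambda,rho}^-1.\<close>
definition smash :: "('h::ring_1 \<Rightarrow> 'a \<Rightarrow> 'a) \<Rightarrow> ('a \<Rightarrow> 'h \<Rightarrow> 'a) \<Rightarrow> ('a \<Rightarrow> 'a \<Rightarrow> 'a)
    \<Rightarrow> ('u \<Rightarrow> 'u \<Rightarrow> 'u) \<Rightarrow> ('u \<Rightarrow> ('h \<times> 'u) list) \<Rightarrow> ('u \<Rightarrow> ('u \<times> 'h) list)
    \<Rightarrow> ('h \<times> 'h \<times> 'u) list \<Rightarrow> ('u \<times> 'h \<times> 'h) list \<Rightarrow> ('h \<times> 'u \<times> 'h) list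
    \<Rightarrow> 'a \<Rightarrow> 'u \<Rightarrow> 'a \<Rightarrow> 'u \<Rightarrow> ('a \<times> 'u) list" where
  "smash la ra mA mU lam rho Xl Xr Th x u y v =
     [(mA (la l1 (ra x (t3 * v1 * r2))) (la (l2 * um * t1) (ra y r3)),
       mU (mU (mU (mU l3 u0) t2) v0) r1).
        (l1, l2, l3) \<leftarrow> Xl, (r1, r2, r3) \<leftarrow> Xr, (t1, t2, t3) \<leftarrow> Th,
        (um, u0) \<leftarrow> lam u, (v0, v1) \<leftarrow> rho v]"

definition smash_mult where
  "smash_mult la ra mA mU lam rho Xl Xr Th xs ys =
     concat [smash la ra mA mU lam rho Xl Xr Th x u y v. (x, u) \<leftarrow> xs, (y, v) \<leftarrow> ys]"

end

theory Submission imports Defs "HOL-Library.Multiset" begin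

definition congr :: "('x list \<Rightarrow> 'x list \<Rightarrow> bool) \<Rightarrow> bool" where
 "congr R \<longleftrightarrow> (\<forall>xs. R xs xs) \<and> (\<forall>xs ys. R xs ys \<longrightarrow> R ys xs) \<and> (\<forall>xs ys zs. R xs ys \<longrightarrow> R ys zs \<longrightarrow> R xs zs)
   \<and> (\<forall>xs xs' ys ys'. R xs xs' \<longrightarrow> R ys ys' \<longrightarrow> R (xs@ys) (xs'@ys')) \<and> (\<forall>xs ys. R (xs@ys) (ys@xs))"

lemma congr_teq2: "congr (teq2 s1 s2)" unfolding congr_def by (meson teq2.intros)
lemma congr_teq3: "congr (teq3 s1 s2 s3)" unfolding congr_def by (meson teq3.intros)

lemma cg_refl: "congr R \<Longrightarrow> R xs xs" unfolding congr_def by blast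
lemma cg_sym: "congr R \<Longrightarrow> R xs ys \<Longrightarrow> R ys xs" unfolding congr_def by blast
lemma cg_trans: "congr R \<Longrightarrow> R xs ys \<Longrightarrow> R ys zs \<Longrightarrow> R xs zs" unfolding congr_def by blast
lemma cg_app: "congr R \<Longrightarrow> R xs xs' \<Longrightarrow> R ys ys' \<Longrightarrow> R (xs@ys) (xs'@ys')" unfolding congr_def by blast
lemma cg_swap: "congr R \<Longrightarrow> R (xs@ys) (ys@xs)" unfolding congr_def by blast

lemma cg_concat: "congr R \<Longrightarrow> (\<And>a. a \<in> set A \<Longrightarrow> R (f a) (g a)) \<Longrightarrow> R (concat (map f A)) (concat (map g A))"
  by (induct A) (auto intro: cg_refl cg_app)

lemma cg_perm: "congr R \<Longrightarrow> mset xs = mset ys \<Longrightarrow> R xs ys"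
proof (induct xs arbitrary: ys)
  case Nil then show ?case by (simp add: cg_refl)
next
  case (Cons x xs)
  then have "x \<in> set ys" by (metis list.set_intros(1) set_mset_mset)
  then obtain ys1 ys2 where ys: "ys = ys1 @ x # ys2" by (meson split_list)
  have "mset xs = mset (ys1 @ ys2)" using Cons(3) ys by simp
  then have "R xs (ys1 @ ys2)" using Cons by blast
  then have 1: "R ([x] @ xs) ([x] @ (ys1 @ ys2))" by (rule cg_app[OF Cons(2) cg_refl[OF Cons(2)]])
  have "R (([x] @ ys1) @ ys2) ((ys1 @ [x]) @ ys2)" by (rule cg_app[OF Cons(2) cg_swap[OF Cons(2)] cg_refl[OF Cons(2)]])
  then have 2: "R (x # ys1 @ ys2) (ys1 @ x # ys2)" by simp
  have "R (x # xs) (x # ys1 @ ys2)" using 1 by simp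
  then show ?case using 2 ys cg_trans[OF Cons(2)] by blast
qed

lemma mset_concat_map: "mset (concat (map f A)) = (\<Sum>a\<leftarrow>A. mset (f a))"
  by (induct A) auto
lemma mset_map_sum: "mset (map f A) = (\<Sum>a\<leftarrow>A. {#f a#})"
  by (induct A) auto
lemma sum_list_swap: "(\<Sum>a\<leftarrow>A. \<Sum>b\<leftarrow>B. h a b) = (\<Sum>b\<leftarrow>B. \<Sum>a\<leftarrow>A. (h a b :: 'x::comm_monoid_add))"
  by (induct A) (auto simp: sum_list_addf)

lemma cg_swap2: "congr R \<Longrightarrow> R (concat (map (\<lambda>a. concat (map (\<lambda>b. h a b) B)) A)) (concat (map (\<lambda>b. concat (map (\<lambda>a. h a b) A)) B))"
  apply (rule cg_perm, assumption)
  apply (simp add: mset_concat_map)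
  apply (rule sum_list_swap)
  done

lemma cg_swapm: "congr R \<Longrightarrow> R (concat (map (\<lambda>a. map (\<lambda>b. h a b) B) A)) (concat (map (\<lambda>b. map (\<lambda>a. h a b) A) B))"
  apply (rule cg_perm, assumption)
  apply (simp only: mset_concat_map mset_map_sum)
  apply (rule sum_list_swap)
  done

lemma cg_interleave: "congr R \<Longrightarrow> R (concat (map (\<lambda>q. f q @ g q) Q)) (concat (map f Q) @ concat (map g Q))"
  apply (rule cg_perm, assumption)
  apply (simp add: mset_concat_map sum_list_addf)
  done

definition resp3 :: "('x list \<Rightarrow> 'x list \<Rightarrow> bool) \<Rightarrow> ('k::field \<Rightarrow> 'a::ab_group_add \<Rightarrow> 'a) \<Rightarrow> ('k \<Rightarrow> 'b::ab_group_add \<Rightarrow> 'b) \<Rightarrow> ('k \<Rightarrow> 'c::ab_group_add \<Rightarrow> 'c) \<Rightarrow> ('a\<times>'b\<times>'c \<Rightarrow> 'x list) \<Rightarrow> bool" where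
"resp3 R s1 s2 s3 \<phi> \<longleftrightarrow> (\<forall>b c. R (\<phi> (0,b,c)) []) \<and>
   (\<forall>a a' b c. R (\<phi> (a+a',b,c)) (\<phi> (a,b,c) @ \<phi> (a',b,c))) \<and>
   (\<forall>a b b' c. R (\<phi> (a,b+b',c)) (\<phi> (a,b,c) @ \<phi> (a,b',c))) \<and>
   (\<forall>a b c c'. R (\<phi> (a,b,c+c')) (\<phi> (a,b,c) @ \<phi> (a,b,c'))) \<and>
   (\<forall>r a b c. R (\<phi> (s1 r a,b,c)) (\<phi> (a,s2 r b,c))) \<and>
   (\<forall>r a b c. R (\<phi> (s1 r a,b,c)) (\<phi> (a,b,s3 r c)))"

lemma teq3_lift:
  assumes "congr R" "resp3 R s1 s2 s3 \<phi>" "teq3 s1 s2 s3 xs ys"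
  shows "R (concat (map \<phi> xs)) (concat (map \<phi> ys))"
  using assms(3)
proof (induction rule: teq3.induct)
  case (t3_refl xs) then show ?case using assms(1) by (rule_tac cg_refl)
next
  case (t3_sym xs ys) then show ?case using assms(1) cg_sym by blast
next
  case (t3_trans xs ys zs) then show ?case using assms(1) cg_trans by blast
next
  case (t3_app xs xs' ys ys') then show ?case using assms(1) cg_app by fastforce
next
  case (t3_swap xs ys) then show ?case using assms(1) cg_swap by fastforce
qed (use assms(2) in \<open>auto simp: resp3_def\<close>)

lemma resp3_concat:
  assumes C: "congr R" and A: "\<And>q. q \<in> set Q \<Longrightarrow> resp3 R s1 s2 s3 (\<lambda>(a,b,c). \<psi> a b c q)"
  shows "resp3 R s1 s2 s3 (\<lambda>(a,b,c). concat (map (\<psi> a b c) Q))"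
proof -
  have add: "R (concat (map f Q)) (concat (map g Q) @ concat (map h Q))"
    if "\<And>q. q \<in> set Q \<Longrightarrow> R (f q) (g q @ h q)" for f g h
    using cg_trans[OF C cg_concat[OF C, of Q f "\<lambda>q. g q @ h q"] cg_interleave[OF C]] that
    by blast
  have z: "R (concat (map f Q)) []" if "\<And>q. q \<in> set Q \<Longrightarrow> R (f q) []" for f
  proof -
    have eq: "concat (map (\<lambda>q. []) Q) = []" by (induct Q) auto
    have "R (concat (map f Q)) (concat (map (\<lambda>q. []) Q))" by (rule cg_concat[OF C]) (rule that)
    then show ?thesis by (simp only: eq)
  qed
  have e: "R (concat (map f Q)) (concat (map g Q))" if "\<And>q. q \<in> set Q \<Longrightarrow> R (f q) (g q)" for f g
    using cg_concat[OF C, of Q f g] that by simp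
  show ?thesis unfolding resp3_def
    apply (simp only: prod.case)
    apply (intro conjI allI add z e)
    using A unfolding resp3_def by simp_all
qed

lemma concat_map_cm: "concat (map h (concat (map (\<lambda>a. map (k a) B) A))) = concat (map (\<lambda>a. concat (map (\<lambda>b. h (k a b)) B)) A)"
  by (induct A) (simp_all add: comp_def)

lemma map_concat_single: "concat (map (\<lambda>x. [f x]) xs) = map f xs"
  by (induct xs) auto

lemma resp3_map:
  assumes "congr R" "\<And>q. q \<in> set Q \<Longrightarrow> resp3 R s1 s2 s3 (\<lambda>(a,b,c). [\<psi> a b c q])"
  shows "resp3 R s1 s2 s3 (\<lambda>(a,b,c). map (\<psi> a b c) Q)"
proof -
  have "(\<lambda>(a,b,c). map (\<psi> a b c) Q) = (\<lambda>(a,b,c). concat (map (\<lambda>q. [\<psi> a b c q]) Q))"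
    by (simp add: map_concat_single)
  then show ?thesis using resp3_concat[OF assms(1), where Q=Q and \<psi>="\<lambda>a b c q. [\<psi> a b c q]"] assms(2) by simp blast
qed


lemma bm_zero_left: "bilinear_mult s m \<Longrightarrow> m 0 a = (0::'a::ab_group_add)"
  unfolding bilinear_mult_def by (metis add_cancel_right_left add_0)
lemma bm_zero_right: "bilinear_mult s m \<Longrightarrow> m a 0 = (0::'a::ab_group_add)"
  unfolding bilinear_mult_def by (metis add_cancel_right_left add_0)

definition tmul where
  "tmul m1 m2 m3 p q = (m1 (fst p) (fst q), m2 (fst (snd p)) (fst (snd q)), m3 (snd (snd p)) (snd (snd q)))"

lemma tm3_alt: "tm3 m1 m2 m3 X Y = concat (map (\<lambda>p. map (tmul m1 m2 m3 p) Y) X)"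
  unfolding tm3_def tmul_def by (simp add: split_def)

lemma resp3_tmul_l:
  assumes "bilinear_mult s1 m1" "bilinear_mult s2 m2" "bilinear_mult s3 m3"
  shows "resp3 (teq3 s1 s2 s3) s1 s2 s3 (\<lambda>(a,b,c). [tmul m1 m2 m3 (a,b,c) q])"
  using assms bm_zero_left[OF assms(1)] unfolding resp3_def tmul_def
  by (simp add:  bilinear_mult_def t3_zero t3_add1 t3_add2 t3_add3 t3_sc2 t3_sc3)

lemma resp3_tmul_r:
  assumes "bilinear_mult s1 m1" "bilinear_mult s2 m2" "bilinear_mult s3 m3"
  shows "resp3 (teq3 s1 s2 s3) s1 s2 s3 (\<lambda>(a,b,c). [tmul m1 m2 m3 p (a,b,c)])"
  using assms bm_zero_right[OF assms(1)] unfolding resp3_def tmul_def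
  by (simp add:  bilinear_mult_def t3_zero t3_add1 t3_add2 t3_add3 t3_sc2 t3_sc3)

lemma tm3_cong_l:
  assumes "bilinear_mult s1 m1" "bilinear_mult s2 m2" "bilinear_mult s3 m3" "teq3 s1 s2 s3 X X'"
  shows "teq3 s1 s2 s3 (tm3 m1 m2 m3 X Y) (tm3 m1 m2 m3 X' Y)"
proof -
  have e: "(\<lambda>p. map (tmul m1 m2 m3 p) Y) = (\<lambda>(a,b,c). map (\<lambda>q. tmul m1 m2 m3 (a,b,c) q) Y)"
    by auto
  have "resp3 (teq3 s1 s2 s3) s1 s2 s3 (\<lambda>(a,b,c). map (\<lambda>q. tmul m1 m2 m3 (a,b,c) q) Y)"
    by (rule resp3_map[OF congr_teq3]) (rule resp3_tmul_l[OF assms(1-3)])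
  then show ?thesis unfolding tm3_alt e
    by (rule teq3_lift[OF congr_teq3 _ assms(4)])
qed

lemma tm3_cong_r:
  assumes "bilinear_mult s1 m1" "bilinear_mult s2 m2" "bilinear_mult s3 m3" "teq3 s1 s2 s3 Y Y'"
  shows "teq3 s1 s2 s3 (tm3 m1 m2 m3 X Y) (tm3 m1 m2 m3 X Y')"
proof -
  have e: "(\<lambda>q. map (\<lambda>p. tmul m1 m2 m3 p q) X) = (\<lambda>(a,b,c). map (\<lambda>p. tmul m1 m2 m3 p (a,b,c)) X)"
    by auto
  have r: "resp3 (teq3 s1 s2 s3) s1 s2 s3 (\<lambda>(a,b,c). map (\<lambda>p. tmul m1 m2 m3 p (a,b,c)) X)"
    by (rule resp3_map[OF congr_teq3]) (rule resp3_tmul_r[OF assms(1-3)])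
  have sw: "teq3 s1 s2 s3 (tm3 m1 m2 m3 X Z) (concat (map (\<lambda>q. map (\<lambda>p. tmul m1 m2 m3 p q) X) Z))" for Z
    unfolding tm3_alt by (rule cg_swapm[OF congr_teq3])
  have "teq3 s1 s2 s3 (concat (map (\<lambda>q. map (\<lambda>p. tmul m1 m2 m3 p q) X) Y)) (concat (map (\<lambda>q. map (\<lambda>p. tmul m1 m2 m3 p q) X) Y'))"
    unfolding e by (rule teq3_lift[OF congr_teq3 r assms(4)])
  then show ?thesis using sw[of Y] sw[of Y'] by (meson teq3.intros)
qed

lemma tm3_assoc:
  assumes "\<forall>a b c. m1 (m1 a b) c = m1 a (m1 b c)" "\<forall>a b c. m2 (m2 a b) c = m2 a (m2 b c)"
    "\<forall>a b c. m3 (m3 a b) c = m3 a (m3 b c)"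
  shows "tm3 m1 m2 m3 (tm3 m1 m2 m3 X Y) Z = tm3 m1 m2 m3 X (tm3 m1 m2 m3 Y Z)"
  unfolding tm3_alt
  by (induct X) (simp_all add: map_concat comp_def tmul_def assms)

lemma tm3_unit_l:
  assumes "\<forall>a. m1 o1 a = a" "\<forall>a. m2 o2 a = a" "\<forall>a. m3 o3 a = a"
  shows "tm3 m1 m2 m3 [(o1,o2,o3)] X = X"
  unfolding tm3_alt using assms by (induct X) (auto simp: tmul_def)

lemma tm3_unit_r:
  assumes "\<forall>a. m1 a o1 = a" "\<forall>a. m2 a o2 = a" "\<forall>a. m3 a o3 = a"
  shows "tm3 m1 m2 m3 X [(o1,o2,o3)] = X"
  unfolding tm3_alt using assms by (induct X) (auto simp: tmul_def)


lemma inv_trick_l: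
  assumes C: "bilinear_mult s1 m1" "bilinear_mult s2 m2" "bilinear_mult s3 m3"
    and As: "\<forall>a b c. m1 (m1 a b) c = m1 a (m1 b c)" "\<forall>a b c. m2 (m2 a b) c = m2 a (m2 b c)"
    "\<forall>a b c. m3 (m3 a b) c = m3 a (m3 b c)"
    and U: "\<forall>a. m1 o1 a = a \<and> m1 a o1 = a" "\<forall>a. m2 o2 a = a \<and> m2 a o2 = a" "\<forall>a. m3 o3 a = a \<and> m3 a o3 = a"
    and h1: "teq3 s1 s2 s3 (tm3 m1 m2 m3 Y X) [(o1,o2,o3)]"
    and h2: "teq3 s1 s2 s3 (tm3 m1 m2 m3 (tm3 m1 m2 m3 X Z) W) [(o1,o2,o3)]"
  shows "teq3 s1 s2 s3 (tm3 m1 m2 m3 Z W) Y"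
proof -
  have "teq3 s1 s2 s3 (tm3 m1 m2 m3 Y (tm3 m1 m2 m3 (tm3 m1 m2 m3 X Z) W)) (tm3 m1 m2 m3 Y [(o1,o2,o3)])"
    by (rule tm3_cong_r[OF C h2])
  moreover have "tm3 m1 m2 m3 Y [(o1,o2,o3)] = Y" using U by (intro tm3_unit_r) auto
  moreover have "tm3 m1 m2 m3 Y (tm3 m1 m2 m3 (tm3 m1 m2 m3 X Z) W) = tm3 m1 m2 m3 (tm3 m1 m2 m3 Y X) (tm3 m1 m2 m3 Z W)"
    by (simp add: tm3_assoc[OF As])
  moreover have "teq3 s1 s2 s3 (tm3 m1 m2 m3 (tm3 m1 m2 m3 Y X) (tm3 m1 m2 m3 Z W)) (tm3 m1 m2 m3 [(o1,o2,o3)] (tm3 m1 m2 m3 Z W))"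
    by (rule tm3_cong_l[OF C h1])
  moreover have "tm3 m1 m2 m3 [(o1,o2,o3)] (tm3 m1 m2 m3 Z W) = tm3 m1 m2 m3 Z W" using U by (intro tm3_unit_l) auto
  ultimately show ?thesis by (metis teq3.t3_sym teq3.t3_trans)
qed

lemma inv_trick_r:
  assumes C: "bilinear_mult s1 m1" "bilinear_mult s2 m2" "bilinear_mult s3 m3"
    and As: "\<forall>a b c. m1 (m1 a b) c = m1 a (m1 b c)" "\<forall>a b c. m2 (m2 a b) c = m2 a (m2 b c)"
    "\<forall>a b c. m3 (m3 a b) c = m3 a (m3 b c)"
    and U: "\<forall>a. m1 o1 a = a \<and> m1 a o1 = a" "\<forall>a. m2 o2 a = a \<and> m2 a o2 = a" "\<forall>a. m3 o3 a = a \<and> m3 a o3 = a"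
    and h1: "teq3 s1 s2 s3 (tm3 m1 m2 m3 X Y) [(o1,o2,o3)]"
    and h2: "teq3 s1 s2 s3 (tm3 m1 m2 m3 W (tm3 m1 m2 m3 Z X)) [(o1,o2,o3)]"
  shows "teq3 s1 s2 s3 (tm3 m1 m2 m3 W Z) Y"
proof -
  have "teq3 s1 s2 s3 (tm3 m1 m2 m3 (tm3 m1 m2 m3 W (tm3 m1 m2 m3 Z X)) Y) (tm3 m1 m2 m3 [(o1,o2,o3)] Y)"
    by (rule tm3_cong_l[OF C h2])
  moreover have "tm3 m1 m2 m3 [(o1,o2,o3)] Y = Y" using U by (intro tm3_unit_l) auto
  moreover have "tm3 m1 m2 m3 (tm3 m1 m2 m3 W (tm3 m1 m2 m3 Z X)) Y = tm3 m1 m2 m3 (tm3 m1 m2 m3 W Z) (tm3 m1 m2 m3 X Y)"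
    by (simp add: tm3_assoc[OF As])
  moreover have "teq3 s1 s2 s3 (tm3 m1 m2 m3 (tm3 m1 m2 m3 W Z) (tm3 m1 m2 m3 X Y)) (tm3 m1 m2 m3 (tm3 m1 m2 m3 W Z) [(o1,o2,o3)])"
    by (rule tm3_cong_r[OF C h1])
  moreover have "tm3 m1 m2 m3 (tm3 m1 m2 m3 W Z) [(o1,o2,o3)] = tm3 m1 m2 m3 W Z" using U by (intro tm3_unit_r) auto
  ultimately show ?thesis by (metis teq3.t3_sym teq3.t3_trans)
qed

definition Idx where
  "Idx lam rho Th u v = concat (map (\<lambda>t. concat (map (\<lambda>w. map (\<lambda>z. (t,w,z)) (rho v)) (lam u))) Th)"

definition Sm where
  "Sm la ra mA' mU x y l r i = (case l of (l1,l2,l3) \<Rightarrow> case r of (r1,r2,r3) \<Rightarrow> case i of ((t1,t2,t3),(um,u0),(v0,v1)) \<Rightarrow>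
     (mA' (la l1 (ra x (t3 * v1 * r2))) (la (l2 * um * t1) (ra y r3)), mU (mU (mU (mU l3 u0) t2) v0) r1))"

lemma smash_form: "smash la ra mA' mU lam rho Xl Xr Th x u y v =
  concat (map (\<lambda>l. concat (map (\<lambda>r. map (\<lambda>i. Sm la ra mA' mU x y l r i) (Idx lam rho Th u v)) Xr)) Xl)"
  unfolding smash_def Idx_def Sm_def
  by (simp add: map_concat comp_def split_def)


lemma vs_zero: "vector_space s \<Longrightarrow> s 0 x = 0"
  unfolding vector_space_def by (metis add_cancel_right_left add_0)

lemma teq2_zero2:
  assumes "vector_space s1" "vector_space s2"
  shows "teq2 s1 s2 [(a, 0)] []"
proof -
  have "teq2 s1 s2 [(s1 0 a, 0)] [(a, s2 0 0)]" by (rule t2_sc)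
  then have "teq2 s1 s2 [(0, 0)] [(a, 0)]"
    using vs_zero[OF assms(1)] vs_zero[OF assms(2)] by simp
  then show ?thesis by (meson t2_sym t2_trans t2_zero)
qed

lemma t2_sc': "teq2 s1 s2 [(a, s2 c b)] [(s1 c a, b)]"
  by (rule t2_sym, rule t2_sc)

context
  fixes sH :: "'k::field \<Rightarrow> 'h::ring_1 \<Rightarrow> 'h"
    and sA :: "'k \<Rightarrow> 'a::ab_group_add \<Rightarrow> 'a"
    and la :: "'h \<Rightarrow> 'a \<Rightarrow> 'a" and ra :: "'a \<Rightarrow> 'h \<Rightarrow> 'a"
    and mA :: "'a \<Rightarrow> 'a \<Rightarrow> 'a" and oA :: 'a
    and sU :: "'k \<Rightarrow> 'u::ab_group_add \<Rightarrow> 'u"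
    and mU :: "'u \<Rightarrow> 'u \<Rightarrow> 'u" and oU :: 'u
    and \<Delta> :: "'h \<Rightarrow> ('h \<times> 'h) list" and \<epsilon> :: "'h \<Rightarrow> 'k"
    and \<Phi> \<Phi>i :: "('h \<times> 'h \<times> 'h) list"
  assumes BA: "bimodule_algebra sH \<Delta> \<epsilon> \<Phi> \<Phi>i sA la ra mA oA"
    and KH: "kalg sH (*) 1" and KU: "kalg sU mU oU"
begin

lemma bmH: "bilinear_mult sH (*)" using KH unfolding kalg_def unital_kalg_def by blast
lemma bmU: "bilinear_mult sU mU" using KU unfolding kalg_def unital_kalg_def by blast
lemma bmA: "bilinear_mult sA mA" using BA unfolding bimodule_algebra_def unital_kalg_def by blast
lemma vsA: "vector_space sA" using BA unfolding bimodule_algebra_def unital_kalg_def by blast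
lemma vsU: "vector_space sU" using KU unfolding kalg_def unital_kalg_def by blast

lemmas mrules = bmH[unfolded bilinear_mult_def] bmU[unfolded bilinear_mult_def] bmA[unfolded bilinear_mult_def]

lemma la0: "la 0 z = 0"
  using BA unfolding bimodule_algebra_def by (metis add_cancel_right_left add_0)

lemma modrules:
  "la (h + h') z = la h z + la h' z" "la h (z + z') = la h z + la h z'"
  "la (sH r h) z = sA r (la h z)" "la h (sA r z) = sA r (la h z)"
  "ra z (h + h') = ra z h + ra z h'" "ra (z + z') h = ra z h + ra z' h"
  "ra z (sH r h) = sA r (ra z h)" "ra (sA r z) h = sA r (ra z h)"
  using BA unfolding bimodule_algebra_def by auto

lemma resp_l: "resp3 (teq2 sA sU) sH sH sU (\<lambda>(a,b,c). [Sm la ra mA mU x y (a,b,c) r i])"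
proof -
  obtain r1 r2 r3 where r: "r = (r1,r2,r3)" by (cases r)
  obtain t1 t2 t3 um u0 v0 v1 where i: "i = ((t1,t2,t3),(um,u0),(v0,v1))" by (cases i) auto
  show ?thesis unfolding resp3_def Sm_def r i
    using mrules
    by (simp add: la0 bm_zero_left[OF bmA] modrules ring_distribs t2_zero t2_add1 t2_add2 t2_sc t2_refl)
qed

lemma resp_r: "resp3 (teq2 sA sU) sU sH sH (\<lambda>(a,b,c). [Sm la ra mA mU x y l (a,b,c) i])"
proof -
  obtain l1 l2 l3 where r: "l = (l1,l2,l3)" by (cases l)
  obtain t1 t2 t3 um u0 v0 v1 where i: "i = ((t1,t2,t3),(um,u0),(v0,v1))" by (cases i) auto
  show ?thesis unfolding resp3_def Sm_def r i
    using mrules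
    by (simp add: bm_zero_right[OF bmU] teq2_zero2[OF vsA vsU] modrules ring_distribs t2_add1 t2_add2 t2_sc' t2_refl)
qed

lemma lift_l:
  assumes "teq3 sH sH sU Xl Xl'"
  shows "teq2 sA sU (smash la ra mA mU lam rho Xl Xr Th x u y v) (smash la ra mA mU lam rho Xl' Xr Th x u y v)"
proof -
  let ?I = "Idx lam rho Th u v"
  have e: "(\<lambda>l. concat (map (\<lambda>r. map (\<lambda>i. Sm la ra mA mU x y l r i) ?I) Xr)) =
     (\<lambda>(a,b,c). concat (map (\<lambda>r. map (\<lambda>i. Sm la ra mA mU x y (a,b,c) r i) ?I) Xr))" by auto
  have "resp3 (teq2 sA sU) sH sH sU (\<lambda>(a,b,c). concat (map (\<lambda>r. map (\<lambda>i. Sm la ra mA mU x y (a,b,c) r i) ?I) Xr))"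
    by (rule resp3_concat[OF congr_teq2], rule resp3_map[OF congr_teq2], rule resp_l)
  then show ?thesis unfolding smash_form e
    by (rule teq3_lift[OF congr_teq2 _ assms])
qed

lemma lift_r:
  assumes "teq3 sU sH sH Xr Xr'"
  shows "teq2 sA sU (smash la ra mA mU lam rho Xl Xr Th x u y v) (smash la ra mA mU lam rho Xl Xr' Th x u y v)"
proof -
  let ?I = "Idx lam rho Th u v"
  have "teq2 sA sU (concat (map (\<lambda>r. map (\<lambda>i. Sm la ra mA mU x y l r i) ?I) Xr))
                   (concat (map (\<lambda>r. map (\<lambda>i. Sm la ra mA mU x y l r i) ?I) Xr'))" for l
  proof -
    have e: "(\<lambda>r. map (\<lambda>i. Sm la ra mA mU x y l r i) ?I) =
       (\<lambda>(a,b,c). map (\<lambda>i. Sm la ra mA mU x y l (a,b,c) i) ?I)" by auto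
    have "resp3 (teq2 sA sU) sU sH sH (\<lambda>(a,b,c). map (\<lambda>i. Sm la ra mA mU x y l (a,b,c) i) ?I)"
      by (rule resp3_map[OF congr_teq2], rule resp_r)
    then show ?thesis unfolding e
      by (rule teq3_lift[OF congr_teq2 _ assms])
  qed
  then show ?thesis unfolding smash_form
    by (intro cg_concat[OF congr_teq2])
qed

lemma sum_pair: "teq2 s1 s2 [(sum_list L, w)] (map (\<lambda>a. (a, w)) L)"
proof (induct L)
  case Nil then show ?case by (simp add: t2_zero)
next
  case (Cons a L)
  have "teq2 s1 s2 [(a + sum_list L, w)] ([(a, w)] @ [(sum_list L, w)])" using t2_add1 by simp
  moreover have "teq2 s1 s2 ([(a, w)] @ [(sum_list L, w)]) ([(a, w)] @ map (\<lambda>a. (a, w)) L)"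
    by (rule t2_app[OF t2_refl Cons])
  ultimately show ?case by (simp add: t2_trans)
qed

definition gact :: "'u \<Rightarrow> 'h \<times> 'h \<Rightarrow> 'h \<times> 'h \<times> 'u \<Rightarrow> 'h \<times> 'h \<times> 'u" where
  "gact o1 g l = (fst g * fst l, snd g * fst (snd l), mU o1 (snd (snd l)))"
definition ract :: "'u \<Rightarrow> 'u \<times> 'h \<times> 'h \<Rightarrow> 'h \<times> 'h \<Rightarrow> 'u \<times> 'h \<times> 'h" where
  "ract o1 r f = (mU (fst r) o1, fst (snd r) * fst f, snd (snd r) * snd f)"

lemma unitU: "mU oU a = a" "mU a oU = a" using KU unfolding kalg_def unital_kalg_def by auto

lemma modrules2:
  "la h (la h' z) = la (h * h') z" "ra (ra z h) h' = ra z (h * h')" "ra (la h z) h' = la h (ra z h')"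
  using BA unfolding bimodule_algebra_def by auto

lemma stepA:
  "teq2 sA sU [Sm la ra (gauge_mult la ra mA F Fi) mU x y l r i]
     (concat (map (\<lambda>g. map (\<lambda>f. Sm la ra mA mU x y (gact oU g l) (ract oU r f) i) F) Fi))"
proof -
  obtain l1 l2 l3 where l: "l = (l1,l2,l3)" by (cases l)
  obtain r1 r2 r3 where r: "r = (r1,r2,r3)" by (cases r)
  obtain t1 t2 t3 um u0 v0 v1 where i: "i = ((t1,t2,t3),(um,u0),(v0,v1))" by (cases i) auto
  let ?W = "mU (mU (mU (mU l3 u0) t2) v0) r1"
  let ?L = "concat (map (\<lambda>(g1,g2). map (\<lambda>(f1,f2). mA (la g1 (ra (la l1 (ra x (t3 * v1 * r2))) f1))
                    (la g2 (ra (la (l2 * um * t1) (ra y r3)) f2))) F) Fi)"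
  have "Sm la ra (gauge_mult la ra mA F Fi) mU x y l r i = (sum_list ?L, ?W)"
    unfolding Sm_def gauge_mult_def l r i by simp
  moreover have "map (\<lambda>a. (a, ?W)) ?L = concat (map (\<lambda>g. map (\<lambda>f. Sm la ra mA mU x y (gact oU g l) (ract oU r f) i) F) Fi)"
    unfolding Sm_def gact_def ract_def l r i
    by (simp add: map_concat split_def modrules2 mult.assoc unitU comp_def)
  ultimately show ?thesis using sum_pair[of sA sU ?L ?W] by simp
qed

lemma stepB:
  "teq2 sA sU (map (\<lambda>i. Sm la ra (gauge_mult la ra mA F Fi) mU x y l r i) I)
     (concat (map (\<lambda>g. concat (map (\<lambda>f. map (\<lambda>i. Sm la ra mA mU x y (gact oU g l) (ract oU r f) i) I) F)) Fi))"
proof -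
  let ?Y = "\<lambda>g f i. Sm la ra mA mU x y (gact oU g l) (ract oU r f) i"
  have 1: "map (\<lambda>i. Sm la ra (gauge_mult la ra mA F Fi) mU x y l r i) I =
     concat (map (\<lambda>i. [Sm la ra (gauge_mult la ra mA F Fi) mU x y l r i]) I)"
    by (simp add: map_concat_single)
  have 2: "teq2 sA sU (concat (map (\<lambda>i. [Sm la ra (gauge_mult la ra mA F Fi) mU x y l r i]) I))
     (concat (map (\<lambda>i. concat (map (\<lambda>g. map (\<lambda>f. ?Y g f i) F) Fi)) I))"
    by (rule cg_concat[OF congr_teq2], rule stepA)
  have 3: "teq2 sA sU (concat (map (\<lambda>i. concat (map (\<lambda>g. map (\<lambda>f. ?Y g f i) F) Fi)) I))
     (concat (map (\<lambda>g. concat (map (\<lambda>i. map (\<lambda>f. ?Y g f i) F) I)) Fi))"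
    by (rule cg_swap2[OF congr_teq2, where h="\<lambda>i g. map (\<lambda>f. ?Y g f i) F"])
  have 4: "teq2 sA sU (concat (map (\<lambda>g. concat (map (\<lambda>i. map (\<lambda>f. ?Y g f i) F) I)) Fi))
     (concat (map (\<lambda>g. concat (map (\<lambda>f. map (\<lambda>i. ?Y g f i) I) F)) Fi))"
    by (rule cg_concat[OF congr_teq2], rule cg_swapm[OF congr_teq2, where h="\<lambda>i f. ?Y g f i" for g])
  show ?thesis unfolding 1 using 2 3 4 by (meson t2_trans)
qed

lemma keyK:
  "teq2 sA sU (smash la ra (gauge_mult la ra mA F Fi) mU lam rho Xl Xr Th x u y v)
     (smash la ra mA mU lam rho (tm3 (*) (*) mU (map (\<lambda>(a,b). (a,b,oU)) Fi) Xl)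
        (tm3 mU (*) (*) Xr (map (\<lambda>(a,b). (oU,a,b)) F)) Th x u y v)"
proof -
  let ?I = "Idx lam rho Th u v"
  let ?Z = "\<lambda>g f l r. map (\<lambda>i. Sm la ra mA mU x y (gact oU g l) (ract oU r f) i) ?I"
  have 1: "teq2 sA sU (smash la ra (gauge_mult la ra mA F Fi) mU lam rho Xl Xr Th x u y v)
     (concat (map (\<lambda>l. concat (map (\<lambda>r. concat (map (\<lambda>g. concat (map (\<lambda>f. ?Z g f l r) F)) Fi)) Xr)) Xl))"
    unfolding smash_form
    by (rule cg_concat[OF congr_teq2], rule cg_concat[OF congr_teq2], rule stepB)
  have 2: "teq2 sA sU (concat (map (\<lambda>l. concat (map (\<lambda>r. concat (map (\<lambda>g. concat (map (\<lambda>f. ?Z g f l r) F)) Fi)) Xr)) Xl))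
     (concat (map (\<lambda>l. concat (map (\<lambda>g. concat (map (\<lambda>r. concat (map (\<lambda>f. ?Z g f l r) F)) Xr)) Fi)) Xl))"
    by (rule cg_concat[OF congr_teq2], rule cg_swap2[OF congr_teq2, where h="\<lambda>r g. concat (map (\<lambda>f. ?Z g f l r) F)" for l])
  have 3: "teq2 sA sU (concat (map (\<lambda>l. concat (map (\<lambda>g. concat (map (\<lambda>r. concat (map (\<lambda>f. ?Z g f l r) F)) Xr)) Fi)) Xl))
     (concat (map (\<lambda>g. concat (map (\<lambda>l. concat (map (\<lambda>r. concat (map (\<lambda>f. ?Z g f l r) F)) Xr)) Xl)) Fi))"
    by (rule cg_swap2[OF congr_teq2, where h="\<lambda>l g. concat (map (\<lambda>r. concat (map (\<lambda>f. ?Z g f l r) F)) Xr)"])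
  have 4: "concat (map (\<lambda>g. concat (map (\<lambda>l. concat (map (\<lambda>r. concat (map (\<lambda>f. ?Z g f l r) F)) Xr)) Xl)) Fi)
     = smash la ra mA mU lam rho (tm3 (*) (*) mU (map (\<lambda>(a,b). (a,b,oU)) Fi) Xl)
        (tm3 mU (*) (*) Xr (map (\<lambda>(a,b). (oU,a,b)) F)) Th x u y v"
  proof -
    have L1: "tm3 (*) (*) mU (map (\<lambda>(a,b). (a,b,oU)) Fi) Xl = concat (map (\<lambda>g. map (\<lambda>l. gact oU g l) Xl) Fi)"
      unfolding tm3_alt tmul_def[abs_def] by (simp add: comp_def gact_def split_def)
    have L2: "tm3 mU (*) (*) Xr (map (\<lambda>(a,b). (oU,a,b)) F) = concat (map (\<lambda>r. map (\<lambda>f. ract oU r f) F) Xr)"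
      unfolding tm3_alt tmul_def[abs_def] by (simp add: comp_def ract_def split_def)
    show ?thesis unfolding smash_form L1 L2 concat_map_cm by (rule refl)
  qed
  show ?thesis using t2_trans[OF t2_trans[OF 1 2] 3] unfolding 4 .
qed

end

lemma cg_smash_mult:
  assumes C: "congr R" and h: "\<And>x u y v. R (f x u y v) (g x u y v)"
  shows "R (concat [f x u y v. (x,u)\<leftarrow>xs, (y,v)\<leftarrow>ys]) (concat [g x u y v. (x,u)\<leftarrow>xs, (y,v)\<leftarrow>ys])"
proof -
  have e: "concat [f x u y v. (x,u)\<leftarrow>xs, (y,v)\<leftarrow>ys] = concat (map (\<lambda>(x,u). concat (map (\<lambda>(y,v). f x u y v) ys)) xs)" for f :: "_ \<Rightarrow> _ \<Rightarrow> _ \<Rightarrow> _ \<Rightarrow> _ list"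
    by (induct xs) auto
  show ?thesis unfolding e
    by (rule cg_concat[OF C]) (auto intro!: cg_concat[OF C] h)
qed

theorem proposition2p10:
  fixes sH :: "'k::field \<Rightarrow> 'h::ring_1 \<Rightarrow> 'h"
    and \<Delta> :: "'h \<Rightarrow> ('h \<times> 'h) list" and \<epsilon> :: "'h \<Rightarrow> 'k"
    and \<Phi> \<Phi>i :: "('h \<times> 'h \<times> 'h) list"
    and sA :: "'k \<Rightarrow> 'a::ab_group_add \<Rightarrow> 'a"
    and la :: "'h \<Rightarrow> 'a \<Rightarrow> 'a" and ra :: "'a \<Rightarrow> 'h \<Rightarrow> 'a"
    and mA :: "'a \<Rightarrow> 'a \<Rightarrow> 'a" and oA :: 'a
    and sU :: "'k \<Rightarrow> 'u::ab_group_add \<Rightarrow> 'u"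
    and mU :: "'u \<Rightarrow> 'u \<Rightarrow> 'u" and oU :: 'u
    and lam :: "'u \<Rightarrow> ('h \<times> 'u) list" and rho :: "'u \<Rightarrow> ('u \<times> 'h) list"
    and Pl Pli :: "('h \<times> 'h \<times> 'u) list"
    and Pr Pri :: "('u \<times> 'h \<times> 'h) list"
    and Plr Plri :: "('h \<times> 'u \<times> 'h) list"
    and F Fi :: "('h \<times> 'h) list"
    and Ql :: "('h \<times> 'h \<times> 'u) list" and Qr :: "('u \<times> 'h \<times> 'h) list"
    and xs ys :: "('a \<times> 'u) list"
  assumes "quasi_bialgebra sH \<Delta> \<epsilon> \<Phi> \<Phi>i"
    and "bimodule_algebra sH \<Delta> \<epsilon> \<Phi> \<Phi>i sA la ra mA oA"
    and "bicomodule_algebra sH \<Delta> \<epsilon> \<Phi> sU mU oU lam rho Pl Pli Pr Pri Plr Plri"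
    and "gauge_transformation sH \<epsilon> F Fi"
    and "tinv3 sH sH sU (*) (*) mU 1 1 oU (gauge_Phi_lambda mU oU Pl Fi) Ql"
    and "tinv3 sU sH sH mU (*) (*) oU 1 1 (gauge_Phi_rho mU oU Pr F) Qr"
  shows "teq2 sA sU
           (smash_mult la ra (gauge_mult la ra mA F Fi) mU lam rho Ql Qr Plri xs ys)
           (smash_mult la ra mA mU lam rho Pli Pri Plri xs ys)"
proof -
  note QB = assms(1)[unfolded quasi_bialgebra_def]
  note BC = assms(3)[unfolded bicomodule_algebra_def left_comodule_algebra_def right_comodule_algebra_def]
  have KH: "kalg sH (*) 1" using QB by blast
  have KU: "kalg sU mU oU" using BC by blast
  have BA: "bimodule_algebra sH \<Delta> \<epsilon> \<Phi> \<Phi>i sA la ra mA oA" by (rule assms(2))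
  have bH: "bilinear_mult sH (*)" using KH unfolding kalg_def unital_kalg_def by blast
  have bU: "bilinear_mult sU mU" using KU unfolding kalg_def unital_kalg_def by blast
  have aU: "\<forall>a b c. mU (mU a b) c = mU a (mU b c)" using KU unfolding kalg_def by blast
  have aH: "\<forall>a b c. (a * b) * c = a * (b * (c::'h))" by (simp add: mult.assoc)
  have uU: "\<forall>a. mU oU a = a \<and> mU a oU = a" using KU unfolding kalg_def unital_kalg_def by blast
  have uH: "\<forall>a. 1 * a = a \<and> a * 1 = (a::'h)" by simp
  have PlPli: "tinv3 sH sH sU (*) (*) mU 1 1 oU Pl Pli" using BC by blast
  have PrPri: "tinv3 sU sH sH mU (*) (*) oU 1 1 Pr Pri" using BC by blast
  have LQ: "teq3 sH sH sU (tm3 (*) (*) mU (map (\<lambda>(a,b). (a,b,oU)) Fi) Ql) Pli"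
    apply (rule inv_trick_l[OF bH bH bU aH aH aU uH uH uU])
    using PlPli unfolding tinv3_def apply blast
    using assms(5) unfolding tinv3_def gauge_Phi_lambda_def by blast
  have RQ: "teq3 sU sH sH (tm3 mU (*) (*) Qr (map (\<lambda>(a,b). (oU,a,b)) F)) Pri"
    apply (rule inv_trick_r[OF bU bH bH aU aH aH uU uH uH])
    using PrPri unfolding tinv3_def apply blast
    using assms(6) unfolding tinv3_def gauge_Phi_rho_def by blast
  have main: "teq2 sA sU (smash la ra (gauge_mult la ra mA F Fi) mU lam rho Ql Qr Plri x u y v)
                      (smash la ra mA mU lam rho Pli Pri Plri x u y v)" for x u y v
  proof -
    note K = keyK[OF BA KH KU, of F Fi lam rho Ql Qr Plri x u y v]
    note L = lift_l[OF BA KH KU LQ, of lam rho "tm3 mU (*) (*) Qr (map (\<lambda>(a,b). (oU,a,b)) F)" Plri x u y v]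
    note R = lift_r[OF BA KH KU RQ, of lam rho Pli Plri x u y v]
    show ?thesis by (rule t2_trans[OF t2_trans[OF K L] R])
  qed
  show ?thesis unfolding smash_mult_def
    by (rule cg_smash_mult[OF congr_teq2 main])
qed

end
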